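(* Under the assumptions of the context, with $F$ having finite mean, define $c(G)=\lim_{n\to\infty}\mathbf E\big[\bar c^{(n)}_{i,j,k}\big]$ for distinct vertices $i,j,k$. Then this limit exists and equals $1$ if $\alpha<1$, equals $\mathbf E\big[(1+\beta\gamma W)^{-1}\big]$ (with $W\sim F$) if $\alpha=1$, and equals $0$ if $\alpha>1$.
   Context: Model $G(n,m,F)$: fix constants $\alpha,\beta,\gamma>0$ and a probability distribution $F$ on $(0,\infty)$; if $F$ has finite mean it is assumed to have mean $1$. For a positive integer $n$ let $m=\lfloor\beta n^\alpha\rfloor$, let $\mathcal V=\{1,\dots,n\}$ and $\mathcal A$ a set of $m$ elements ("groups"). Let $W_1,\dots,W_n$ be i.i.d. with distribution $F$ and set $p_i=\gamma W_i n^{-(1+\alpha)/2}\wedge 1$. Conditionally on the weights, form a bipartite graph $B(n,m,F)$ on $\mathcal V\cup\mathcal A$ by including each edge between $i\in\mathcal V$ and $a\in\mathcal A$ independently with probability $p_i$. The graph $G(n,m,F)$ on $\mathcal V$ has an edge between distinct $i,j$ iff some $a\in\mathcal A$ is adjacent to both in $B(n,m,F)$. $\bar{\mathbf P}_n$ is the law of $B(n,m,F)$ conditional on the weights, $E_{ij}$ is the event that $i$ and $j$ share a group, and $\bar c^{(n)}_{i,j,k}=\bar{\mathbf P}_n(E_{ij}\mid E_{ik}\cap E_{jk})$; the expectation $\mathbf E$ is over the weights. *)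

theory Defs
  imports "HOL-Probability.Probability"
begin

definition num_groups :: "real \<Rightarrow> real \<Rightarrow> nat \<Rightarrow> nat" where
  "num_groups \<alpha> \<beta> n = nat \<lfloor>\<beta> * real n powr \<alpha>\<rfloor>"

definition edge_prob :: "real \<Rightarrow> real \<Rightarrow> nat \<Rightarrow> real \<Rightarrow> real" where
  "edge_prob \<alpha> \<gamma> n w = min (\<gamma> * w * real n powr (- (1 + \<alpha>) / 2)) 1"

text \<open>A bipartite graph is encoded as its edge indicator on {1..n} x {1..m}.\<close>
definition bip_pmf :: "real \<Rightarrow> real \<Rightarrow> real \<Rightarrow> nat \<Rightarrow> (nat \<Rightarrow> real) \<Rightarrow> (nat \<times> nat \<Rightarrow> bool) pmf" where
  "bip_pmf \<alpha> \<beta> \<gamma> n W =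
     Pi_pmf ({1..n} \<times> {1..num_groups \<alpha> \<beta> n}) False
       (\<lambda>(i, a). bernoulli_pmf (edge_prob \<alpha> \<gamma> n (W i)))"

definition share_group :: "nat \<Rightarrow> nat \<Rightarrow> nat \<Rightarrow> (nat \<times> nat \<Rightarrow> bool) set" where
  "share_group m i j = {B. \<exists>a\<in>{1..m}. B (i, a) \<and> B (j, a)}"

definition cbar :: "real \<Rightarrow> real \<Rightarrow> real \<Rightarrow> nat \<Rightarrow> (nat \<Rightarrow> real) \<Rightarrow> nat \<Rightarrow> nat \<Rightarrow> nat \<Rightarrow> real" where
  "cbar \<alpha> \<beta> \<gamma> n W i j k =
     (let M = bip_pmf \<alpha> \<beta> \<gamma> n W; m = num_groups \<alpha> \<beta> n in
      measure_pmf.prob M (share_group m i j \<inter> share_group m i k \<inter> share_group m j k)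
      / measure_pmf.prob M (share_group m i k \<inter> share_group m j k))"

definition exp_cbar :: "real measure \<Rightarrow> real \<Rightarrow> real \<Rightarrow> real \<Rightarrow> nat \<Rightarrow> nat \<Rightarrow> nat \<Rightarrow> nat \<Rightarrow> real" where
  "exp_cbar F \<alpha> \<beta> \<gamma> n i j k =
     integral\<^sup>L (PiM {1..n} (\<lambda>_. F)) (\<lambda>W. cbar \<alpha> \<beta> \<gamma> n W i j k)"

end

theory Submission
  imports Defs "HOL-Probability.Probability"
begin

lemma bernoulli_clamp: "bernoulli_pmf p = bernoulli_pmf (max 0 (min 1 p))"
  by (rule pmf_eqI) (simp add: bernoulli_pmf.rep_eq)

lemma Pi_pmf_pair_proj:
  assumes "finite A" "u \<in> A" "v \<in> A" "u \<noteq> v"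
  shows "map_pmf (\<lambda>f. (f u, f v)) (Pi_pmf A d p) = pair_pmf (p u) (p v)"
proof -
  have A: "A = insert u (A - {u})" using assms by auto
  have "map_pmf (\<lambda>f. (f u, f v)) (Pi_pmf A d p)
      = map_pmf (\<lambda>f. (f u, f v)) (map_pmf (\<lambda>(y,f). f(u:=y)) (pair_pmf (p u) (Pi_pmf (A - {u}) d p)))"
    by (subst A, subst Pi_pmf_insert) (use assms in auto)
  also have "\<dots> = map_pmf (\<lambda>(a, b). (id a, (\<lambda>f. f v) b)) (pair_pmf (p u) (Pi_pmf (A - {u}) d p))"
    using assms by (auto simp: pmf.map_comp o_def case_prod_unfold intro!: map_pmf_cong)
  also have "\<dots> = pair_pmf (p u) (p v)"
    by (subst map_pair) (use assms in \<open>simp add: Pi_pmf_component\<close>)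
  finally show ?thesis .
qed

lemma Pi_pmf_tri_proj:
  assumes "finite A" "u \<in> A" "v \<in> A" "w \<in> A" "u \<noteq> v" "u \<noteq> w" "v \<noteq> w"
  shows "map_pmf (\<lambda>f. (f u, f v, f w)) (Pi_pmf A d p) = pair_pmf (p u) (pair_pmf (p v) (p w))"
proof -
  have A: "A = insert u (A - {u})" using assms by auto
  have "map_pmf (\<lambda>f. (f u, f v, f w)) (Pi_pmf A d p)
      = map_pmf (\<lambda>f. (f u, f v, f w)) (map_pmf (\<lambda>(y,f). f(u:=y)) (pair_pmf (p u) (Pi_pmf (A - {u}) d p)))"
    by (subst A, subst Pi_pmf_insert) (use assms in auto)
  also have "\<dots> = map_pmf (\<lambda>(a, b). (id a, (\<lambda>f. (f v, f w)) b)) (pair_pmf (p u) (Pi_pmf (A - {u}) d p))"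
    using assms by (auto simp: pmf.map_comp o_def case_prod_unfold intro!: map_pmf_cong)
  also have "\<dots> = pair_pmf (p u) (pair_pmf (p v) (p w))"
    by (subst map_pair) (use assms in \<open>simp add: Pi_pmf_pair_proj\<close>)
  finally show ?thesis .
qed

lemma prob_pair_pmf_times:
  "measure_pmf.prob (pair_pmf M N) (A \<times> B) = measure_pmf.prob M A * measure_pmf.prob N B"
proof -
  have "measure_pmf.prob (pair_pmf M N) (A \<times> B) = measure_pmf.prob (pair_pmf M N) ((A \<inter> set_pmf M) \<times> (B \<inter> set_pmf N))"
    by (subst measure_Int_set_pmf[symmetric]) (simp add: Times_Int_Times Int_ac)
  also have "\<dots> = measure_pmf.prob M (A \<inter> set_pmf M) * measure_pmf.prob N (B \<inter> set_pmf N)"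
    by (rule measure_pmf_prob_product) auto
  finally show ?thesis by (simp add: measure_Int_set_pmf)
qed

definition tri_prob :: "bool pmf \<Rightarrow> bool pmf \<Rightarrow> bool pmf \<Rightarrow> (bool \<Rightarrow> bool \<Rightarrow> bool \<Rightarrow> bool) \<Rightarrow> real" where
  "tri_prob P Q R \<phi> = measure_pmf.prob (pair_pmf P (pair_pmf Q R)) {(a, b, c). \<phi> a b c}"

lemma group_prob:
  fixes q :: "'v \<Rightarrow> bool pmf" and G :: "'g set"
  assumes "finite V" "finite G" "i \<in> V" "j \<in> V" "k \<in> V" "i \<noteq> j" "i \<noteq> k" "j \<noteq> k"
  shows "measure_pmf.prob (Pi_pmf (V \<times> G) False (\<lambda>(v, a). q v))
           {B. \<forall>a\<in>G. \<phi> (B (i, a)) (B (j, a)) (B (k, a))} = tri_prob (q i) (q j) (q k) \<phi> ^ card G"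
  using assms(2)
proof (induction G rule: finite_induct)
  case empty
  then show ?case by simp
next
  case (insert a G)
  let ?E = "\<lambda>G. {B. \<forall>a\<in>G. \<phi> (B (i, a)) (B (j, a)) (B (k, a))}"
  have un: "V \<times> insert a G = (V \<times> {a}) \<union> (V \<times> G)" by auto
  have pi: "Pi_pmf (V \<times> insert a G) False (\<lambda>(v, a). q v) =
        map_pmf (\<lambda>(f,g) x. if x \<in> V \<times> {a} then f x else g x)
             (pair_pmf (Pi_pmf (V \<times> {a}) False (\<lambda>(v, a). q v)) (Pi_pmf (V \<times> G) False (\<lambda>(v, a). q v)))"
    unfolding un by (rule Pi_pmf_union) (use insert assms in auto)
  have ne: "\<And>ab. ab \<in> G \<Longrightarrow> (ab = a) = False" using insert by auto
  have vim: "(\<lambda>(f,g) x. if x \<in> V \<times> {a} then f x else g x) -` ?E (insert a G) = ?E {a} \<times> ?E G"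
    using assms by (auto simp: ne)
  from pi have "measure_pmf.prob (Pi_pmf (V \<times> insert a G) False (\<lambda>(v, a). q v)) (?E (insert a G))
       = measure_pmf.prob (pair_pmf (Pi_pmf (V \<times> {a}) False (\<lambda>(v, a). q v)) (Pi_pmf (V \<times> G) False (\<lambda>(v, a). q v)))
           (?E {a} \<times> ?E G)"
    by (simp only: pi measure_map_pmf vim)
  also have "measure_pmf.prob (pair_pmf (Pi_pmf (V \<times> {a}) False (\<lambda>(v, a). q v)) (Pi_pmf (V \<times> G) False (\<lambda>(v, a). q v)))
         (?E {a} \<times> ?E G) = measure_pmf.prob (Pi_pmf (V \<times> {a}) False (\<lambda>(v, a). q v)) (?E {a}) * tri_prob (q i) (q j) (q k) \<phi> ^ card G"
    by (simp add: prob_pair_pmf_times insert.IH)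
  also have "measure_pmf.prob (Pi_pmf (V \<times> {a}) False (\<lambda>(v, a). q v)) (?E {a})
        = measure_pmf.prob (map_pmf (\<lambda>f. (f (i,a), f (j,a), f (k,a))) (Pi_pmf (V \<times> {a}) False (\<lambda>(v, a). q v))) {(x, y, z). \<phi> x y z}"
    by (simp add: vimage_def)
  also have "map_pmf (\<lambda>f. (f (i,a), f (j,a), f (k,a))) (Pi_pmf (V \<times> {a}) False (\<lambda>(v, a). q v))
         = pair_pmf (q i) (pair_pmf (q j) (q k))"
    by (subst Pi_pmf_tri_proj) (use assms in auto)
  finally show ?case using insert by (simp add: tri_prob_def)
qed

lemma tri_prob_bern:
  assumes "0 \<le> x" "x \<le> 1" "0 \<le> y" "y \<le> 1" "0 \<le> z" "z \<le> 1"
  shows "tri_prob (bernoulli_pmf x) (bernoulli_pmf y) (bernoulli_pmf z) \<phi> =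
    (if \<phi> True True True then x * y * z else 0) + (if \<phi> True True False then x * y * (1 - z) else 0) +
    (if \<phi> True False True then x * (1 - y) * z else 0) + (if \<phi> True False False then x * (1 - y) * (1 - z) else 0) +
    (if \<phi> False True True then (1 - x) * y * z else 0) + (if \<phi> False True False then (1 - x) * y * (1 - z) else 0) +
    (if \<phi> False False True then (1 - x) * (1 - y) * z else 0) + (if \<phi> False False False then (1 - x) * (1 - y) * (1 - z) else 0)"
proof -
  have "tri_prob (bernoulli_pmf x) (bernoulli_pmf y) (bernoulli_pmf z) \<phi> =
     (\<Sum>t\<in>{(a, b, c). \<phi> a b c}. pmf (pair_pmf (bernoulli_pmf x) (pair_pmf (bernoulli_pmf y) (bernoulli_pmf z))) t)"
    unfolding tri_prob_def by (rule measure_measure_pmf_finite) simp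
  also have "\<dots> = (\<Sum>t\<in>UNIV. if \<phi> (fst t) (fst (snd t)) (snd (snd t)) then pmf (pair_pmf (bernoulli_pmf x) (pair_pmf (bernoulli_pmf y) (bernoulli_pmf z))) t else 0)"
    by (subst sum.inter_filter[symmetric]) (auto intro!: sum.cong simp: case_prod_unfold)
  also have U: "(UNIV :: (bool \<times> bool \<times> bool) set) = {(True,True,True), (True,True,False), (True,False,True), (True,False,False),
     (False,True,True), (False,True,False), (False,False,True), (False,False,False)}"
    by auto
  finally show ?thesis using assms by (simp add: pmf_pair)
qed

lemma P1:
  fixes Y d :: real and k :: nat
  assumes "0 \<le> Y" "0 \<le> d" "Y + d \<le> 1"
  shows "real k * d * Y ^ (k - 1) \<le> (Y + d) ^ k - Y ^ k \<and> (Y + d) ^ k - Y ^ k \<le> real k * d"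
proof (cases "d = 0")
  case True then show ?thesis by simp
next
  case False
  hence "Y < Y + d" using assms by simp
  from MVT2[OF this, of "\<lambda>t. t ^ k" "\<lambda>t. real k * t ^ (k - 1)"]
  obtain z where z: "Y < z" "z < Y + d" "(Y + d) ^ k - Y ^ k = (Y + d - Y) * (real k * z ^ (k - 1))"
    by (auto intro!: derivative_eq_intros)
  have "Y ^ (k - 1) \<le> z ^ (k - 1)" using z assms by (intro power_mono) auto
  moreover have "z ^ (k - 1) \<le> 1" using z assms by (intro power_le_one) auto
  ultimately have "real k * Y ^ (k - 1) \<le> real k * z ^ (k - 1)" "real k * z ^ (k - 1) \<le> real k * 1"
    by (auto intro!: mult_left_mono simp del: mult_1_right)
  hence "d * (real k * Y ^ (k - 1)) \<le> d * (real k * z ^ (k - 1))" "d * (real k * z ^ (k - 1)) \<le> d * (real k * 1)"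
    using assms by (auto intro!: mult_left_mono)
  thus ?thesis using z by (simp add: mult_ac)
qed

lemma P2:
  fixes Y b c :: real and k :: nat
  assumes "0 \<le> Y" "0 \<le> b" "0 \<le> c" "Y + b + c \<le> 1"
  shows "real k * (real k - 1) * b * c * Y ^ (k - 2) \<le> (Y+b+c)^k - (Y+b)^k - (Y+c)^k + Y^k
       \<and> (Y+b+c)^k - (Y+b)^k - (Y+c)^k + Y^k \<le> real k * (real k - 1) * b * c"
proof (cases "c = 0 \<or> k = 0")
  case True then show ?thesis by auto
next
  case False
  hence c: "c > 0" and k: "k \<ge> 1" using assms by auto
  hence "Y < Y + c" by simp
  have der: "\<And>t. Y \<le> t \<Longrightarrow> t \<le> Y + c \<Longrightarrow> ((\<lambda>t. (t + b) ^ k - t ^ k) has_real_derivative (real k * ((t + b) ^ (k - 1) - t ^ (k - 1)))) (at t)"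
    by (auto intro!: derivative_eq_intros simp: algebra_simps)
  from MVT2[OF \<open>Y < Y + c\<close> der]
  obtain z where z: "Y < z" "z < Y + c"
    "((Y + c) + b) ^ k - (Y + c) ^ k - ((Y + b) ^ k - Y ^ k) = (Y + c - Y) * (real k * ((z + b) ^ (k - 1) - z ^ (k - 1)))"
    by blast
  have e: "(Y+b+c)^k - (Y+b)^k - (Y+c)^k + Y^k = c * (real k * ((z + b) ^ (k - 1) - z ^ (k - 1)))"
    using z(3) by (simp add: algebra_simps)
  have p1: "real (k-1) * b * z ^ (k - 1 - 1) \<le> (z + b) ^ (k-1) - z ^ (k-1) \<and> (z + b) ^ (k-1) - z ^ (k-1) \<le> real (k-1) * b"
    using P1[of z b "k-1"] z assms by auto
  have kk: "real (k - 1) = real k - 1" "k - 1 - 1 = k - 2" using k by auto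
  have "Y ^ (k - 2) \<le> z ^ (k - 2)" using z assms by (intro power_mono) auto
  hence "real k * (real k - 1) * b * c * Y ^ (k - 2) \<le> real k * (real k - 1) * b * c * z ^ (k - 2)"
    using k assms by (intro mult_left_mono) auto
  also have "\<dots> = c * (real k * (real (k-1) * b * z ^ (k - 1 - 1)))" using kk by (simp add: mult_ac)
  also have "\<dots> \<le> c * (real k * ((z + b) ^ (k - 1) - z ^ (k - 1)))"
    using p1 c by (intro mult_left_mono) auto
  finally have lo: "real k * (real k - 1) * b * c * Y ^ (k - 2) \<le> (Y+b+c)^k - (Y+b)^k - (Y+c)^k + Y^k"
    using e by simp
  have "c * (real k * ((z + b) ^ (k - 1) - z ^ (k - 1))) \<le> c * (real k * (real (k-1) * b))"
    using p1 c by (intro mult_left_mono) auto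
  hence "(Y+b+c)^k - (Y+b)^k - (Y+c)^k + Y^k \<le> real k * (real k - 1) * b * c"
    using e kk by (simp add: mult_ac)
  with lo show ?thesis by simp
qed

lemma P3:
  fixes Y a b c :: real and k :: nat
  assumes "0 \<le> Y" "0 \<le> a" "0 \<le> b" "0 \<le> c" "Y + a + b + c \<le> 1"
  shows "0 \<le> (Y+a+b+c)^k - (Y+b+c)^k - (Y+a+c)^k - (Y+a+b)^k + (Y+a)^k + (Y+b)^k + (Y+c)^k - Y^k
       \<and> (Y+a+b+c)^k - (Y+b+c)^k - (Y+a+c)^k - (Y+a+b)^k + (Y+a)^k + (Y+b)^k + (Y+c)^k - Y^k
          \<le> real k ^ 3 * a * b * c"
proof (cases "a = 0 \<or> k = 0")
  case True then show ?thesis by (auto simp: algebra_simps)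
next
  case False
  hence a: "a > 0" and k: "k \<ge> 1" using assms by auto
  hence "Y < Y + a" by simp
  have der: "\<And>t. Y \<le> t \<Longrightarrow> t \<le> Y + a \<Longrightarrow> ((\<lambda>t. (t+b+c)^k - (t+b)^k - (t+c)^k + t^k) has_real_derivative
      (real k * ((t+b+c)^(k-1) - (t+b)^(k-1) - (t+c)^(k-1) + t^(k-1)))) (at t)"
    by (auto intro!: derivative_eq_intros simp: algebra_simps)
  from MVT2[OF \<open>Y < Y + a\<close> der]
  obtain z where z: "Y < z" "z < Y + a"
    "((Y+a)+b+c)^k - ((Y+a)+b)^k - ((Y+a)+c)^k + (Y+a)^k - ((Y+b+c)^k - (Y+b)^k - (Y+c)^k + Y^k)
      = (Y + a - Y) * (real k * ((z+b+c)^(k-1) - (z+b)^(k-1) - (z+c)^(k-1) + z^(k-1)))"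
    by blast
  have e: "(Y+a+b+c)^k - (Y+b+c)^k - (Y+a+c)^k - (Y+a+b)^k + (Y+a)^k + (Y+b)^k + (Y+c)^k - Y^k
     = a * (real k * ((z+b+c)^(k-1) - (z+b)^(k-1) - (z+c)^(k-1) + z^(k-1)))"
    using z(3) by (simp add: algebra_simps)
  have p2: "real (k-1) * (real (k-1) - 1) * b * c * z ^ (k - 1 - 2) \<le> (z+b+c)^(k-1) - (z+b)^(k-1) - (z+c)^(k-1) + z^(k-1)
       \<and> (z+b+c)^(k-1) - (z+b)^(k-1) - (z+c)^(k-1) + z^(k-1) \<le> real (k-1) * (real (k-1) - 1) * b * c"
    using P2[of z b c "k-1"] z assms by auto
  have nn: "0 \<le> real (k-1) * (real (k-1) - 1) * b * c * z ^ (k - 1 - 2)"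
    using assms z by (cases "k \<le> 1") (auto intro!: mult_nonneg_nonneg)
  have lo: "0 \<le> (Y+a+b+c)^k - (Y+b+c)^k - (Y+a+c)^k - (Y+a+b)^k + (Y+a)^k + (Y+b)^k + (Y+c)^k - Y^k"
    unfolding e using p2 nn a by (intro mult_nonneg_nonneg) auto
  have "a * (real k * ((z+b+c)^(k-1) - (z+b)^(k-1) - (z+c)^(k-1) + z^(k-1)))
      \<le> a * (real k * (real (k-1) * (real (k-1) - 1) * b * c))"
    using p2 a by (intro mult_left_mono) auto
  also have "\<dots> \<le> a * (real k * (real k * real k * b * c))"
  proof -
    have "real (k-1) * (real (k-1) - 1) \<le> real k * real k" using k
      by (cases "k = 1") (auto intro!: mult_mono simp: of_nat_diff)
    hence "real (k-1) * (real (k-1) - 1) * (b * c) \<le> real k * real k * (b * c)"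
      using assms by (intro mult_right_mono) auto
    thus ?thesis using a by (intro mult_left_mono) (auto simp: mult_ac)
  qed
  finally show ?thesis using lo e by (simp add: power3_eq_cube mult_ac)
qed

lemma pmf_Un: "measure_pmf.prob M (A \<union> B) = measure_pmf.prob M A + measure_pmf.prob M B - measure_pmf.prob M (A \<inter> B)"
  by (simp add: measure_Un3 measure_pmf.fmeasurable_eq_sets)

lemma pmf_compl: "measure_pmf.prob M (- A) = 1 - measure_pmf.prob M A"
  using measure_pmf.prob_compl[of A M] by (simp add: Compl_eq_Diff_UNIV)

lemma IE2: "measure_pmf.prob M (X \<inter> Y) = 1 - measure_pmf.prob M (-X) - measure_pmf.prob M (-Y) + measure_pmf.prob M (-X \<inter> -Y)"
proof -
  have "measure_pmf.prob M (X \<inter> Y) = 1 - measure_pmf.prob M (-X \<union> -Y)"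
    by (subst pmf_compl[symmetric]) simp
  thus ?thesis by (simp add: pmf_Un)
qed

lemma IE3: "measure_pmf.prob M (X \<inter> Y \<inter> Z) = 1 - measure_pmf.prob M (-X) - measure_pmf.prob M (-Y) - measure_pmf.prob M (-Z)
   + measure_pmf.prob M (-X \<inter> -Y) + measure_pmf.prob M (-X \<inter> -Z) + measure_pmf.prob M (-Y \<inter> -Z)
   - measure_pmf.prob M (-X \<inter> -Y \<inter> -Z)"
proof -
  have "measure_pmf.prob M (X \<inter> Y \<inter> Z) = 1 - measure_pmf.prob M ((-X \<union> -Y) \<union> -Z)"
    by (subst pmf_compl[symmetric]) simp
  also have "measure_pmf.prob M ((-X \<union> -Y) \<union> -Z) = measure_pmf.prob M (-X \<union> -Y) + measure_pmf.prob M (-Z)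
      - measure_pmf.prob M ((-X \<inter> -Z) \<union> (-Y \<inter> -Z))"
    by (subst pmf_Un) (simp add: Int_Un_distrib2)
  also have "measure_pmf.prob M ((-X \<inter> -Z) \<union> (-Y \<inter> -Z)) = measure_pmf.prob M (-X \<inter> -Z) + measure_pmf.prob M (-Y \<inter> -Z)
      - measure_pmf.prob M (-X \<inter> -Y \<inter> -Z)"
    by (subst pmf_Un) (simp add: Int_ac)
  finally show ?thesis by (simp add: pmf_Un)
qed

definition ff :: "nat \<Rightarrow> real \<Rightarrow> real" where "ff m t = (1 - t) ^ m"

definition Dform :: "nat \<Rightarrow> real \<Rightarrow> real \<Rightarrow> real \<Rightarrow> real" where
  "Dform m x y z = 1 - ff m (x*z) - ff m (y*z) + ff m (x*z + y*z - x*y*z)"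

definition Nform :: "nat \<Rightarrow> real \<Rightarrow> real \<Rightarrow> real \<Rightarrow> real" where
  "Nform m x y z = 1 - ff m (x*y) - ff m (x*z) - ff m (y*z) + ff m (x*z + y*z - x*y*z)
     + ff m (x*y + x*z - x*y*z) + ff m (x*y + y*z - x*y*z) - ff m (x*y + x*z + y*z - 2*x*y*z)"

definition qq :: "real \<Rightarrow> real \<Rightarrow> nat \<Rightarrow> real \<Rightarrow> real" where
  "qq \<alpha> \<gamma> n w = max 0 (min 1 (edge_prob \<alpha> \<gamma> n w))"

lemma cbar_formula:
  assumes "i \<in> {1..n}" "j \<in> {1..n}" "k \<in> {1..n}" "i \<noteq> j" "i \<noteq> k" "j \<noteq> k"
  shows "cbar \<alpha> \<beta> \<gamma> n W i j k =
     Nform (num_groups \<alpha> \<beta> n) (qq \<alpha> \<gamma> n (W i)) (qq \<alpha> \<gamma> n (W j)) (qq \<alpha> \<gamma> n (W k))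
   / Dform (num_groups \<alpha> \<beta> n) (qq \<alpha> \<gamma> n (W i)) (qq \<alpha> \<gamma> n (W j)) (qq \<alpha> \<gamma> n (W k))"
proof -
  define m where "m = num_groups \<alpha> \<beta> n"
  define x where "x = qq \<alpha> \<gamma> n (W i)"
  define y where "y = qq \<alpha> \<gamma> n (W j)"
  define z where "z = qq \<alpha> \<gamma> n (W k)"
  define q where "q = (\<lambda>v. bernoulli_pmf (qq \<alpha> \<gamma> n (W v)))"
  have xyz: "0 \<le> x" "x \<le> 1" "0 \<le> y" "y \<le> 1" "0 \<le> z" "z \<le> 1"
    unfolding x_def y_def z_def qq_def by auto
  have M: "bip_pmf \<alpha> \<beta> \<gamma> n W = Pi_pmf ({1..n} \<times> {1..m}) False (\<lambda>(v, a). q v)"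
    unfolding bip_pmf_def m_def q_def qq_def by (subst bernoulli_clamp) simp
  let ?M = "Pi_pmf ({1..n} \<times> {1..m}) False (\<lambda>(v, a). q v)"
  have gp: "measure_pmf.prob ?M {B. \<forall>a\<in>{1..m}. \<phi> (B (i, a)) (B (j, a)) (B (k, a))}
       = tri_prob (q i) (q j) (q k) \<phi> ^ m" for \<phi>
    using group_prob[of "{1..n}" "{1..m}" i j k q \<phi>] assms by simp
  have qi: "q i = bernoulli_pmf x" "q j = bernoulli_pmf y" "q k = bernoulli_pmf z"
    unfolding q_def x_def y_def z_def by auto
  note tb = tri_prob_bern[OF xyz]
  have c_ij: "- share_group m i j = {B. \<forall>a\<in>{1..m}. (\<lambda>a b c. \<not> (a \<and> b)) (B (i, a)) (B (j, a)) (B (k, a))}"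
    by (auto simp: share_group_def)
  have c_ik: "- share_group m i k = {B. \<forall>a\<in>{1..m}. (\<lambda>a b c. \<not> (a \<and> c)) (B (i, a)) (B (j, a)) (B (k, a))}"
    by (auto simp: share_group_def)
  have c_jk: "- share_group m j k = {B. \<forall>a\<in>{1..m}. (\<lambda>a b c. \<not> (b \<and> c)) (B (i, a)) (B (j, a)) (B (k, a))}"
    by (auto simp: share_group_def)
  have c_ij_ik: "- share_group m i j \<inter> - share_group m i k = {B. \<forall>a\<in>{1..m}. (\<lambda>a b c. \<not> (a \<and> b) \<and> \<not> (a \<and> c)) (B (i, a)) (B (j, a)) (B (k, a))}"
    by (auto simp: share_group_def)
  have c_ij_jk: "- share_group m i j \<inter> - share_group m j k = {B. \<forall>a\<in>{1..m}. (\<lambda>a b c. \<not> (a \<and> b) \<and> \<not> (b \<and> c)) (B (i, a)) (B (j, a)) (B (k, a))}"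
    by (auto simp: share_group_def)
  have c_ik_jk: "- share_group m i k \<inter> - share_group m j k = {B. \<forall>a\<in>{1..m}. (\<lambda>a b c. \<not> (a \<and> c) \<and> \<not> (b \<and> c)) (B (i, a)) (B (j, a)) (B (k, a))}"
    by (auto simp: share_group_def)
  have c_all: "- share_group m i j \<inter> - share_group m i k \<inter> - share_group m j k = {B. \<forall>a\<in>{1..m}. (\<lambda>a b c. \<not> (a \<and> b) \<and> \<not> (a \<and> c) \<and> \<not> (b \<and> c)) (B (i, a)) (B (j, a)) (B (k, a))}"
    by (auto simp: share_group_def)
  have t1: "tri_prob (bernoulli_pmf x) (bernoulli_pmf y) (bernoulli_pmf z) (\<lambda>a b c. \<not> (a \<and> b)) = 1 - (x*y)"
    unfolding tb by (simp add: algebra_simps)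
  have "measure_pmf.prob ?M (- share_group m i j) = tri_prob (q i) (q j) (q k) (\<lambda>a b c. \<not> (a \<and> b)) ^ m"
    using gp[of "\<lambda>a b c. \<not> (a \<and> b)"] c_ij by simp
  hence e1: "measure_pmf.prob ?M (- share_group m i j) = ff m (x*y)"
    unfolding qi t1 ff_def by simp
  have t2: "tri_prob (bernoulli_pmf x) (bernoulli_pmf y) (bernoulli_pmf z) (\<lambda>a b c. \<not> (a \<and> c)) = 1 - (x*z)"
    unfolding tb by (simp add: algebra_simps)
  have "measure_pmf.prob ?M (- share_group m i k) = tri_prob (q i) (q j) (q k) (\<lambda>a b c. \<not> (a \<and> c)) ^ m"
    using gp[of "\<lambda>a b c. \<not> (a \<and> c)"] c_ik by simp
  hence e2: "measure_pmf.prob ?M (- share_group m i k) = ff m (x*z)"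
    unfolding qi t2 ff_def by simp
  have t3: "tri_prob (bernoulli_pmf x) (bernoulli_pmf y) (bernoulli_pmf z) (\<lambda>a b c. \<not> (b \<and> c)) = 1 - (y*z)"
    unfolding tb by (simp add: algebra_simps)
  have "measure_pmf.prob ?M (- share_group m j k) = tri_prob (q i) (q j) (q k) (\<lambda>a b c. \<not> (b \<and> c)) ^ m"
    using gp[of "\<lambda>a b c. \<not> (b \<and> c)"] c_jk by simp
  hence e3: "measure_pmf.prob ?M (- share_group m j k) = ff m (y*z)"
    unfolding qi t3 ff_def by simp
  have t4: "tri_prob (bernoulli_pmf x) (bernoulli_pmf y) (bernoulli_pmf z) (\<lambda>a b c. \<not> (a \<and> b) \<and> \<not> (a \<and> c)) = 1 - (x*y + x*z - x*y*z)"
    unfolding tb by (simp add: algebra_simps)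
  have "measure_pmf.prob ?M (- share_group m i j \<inter> - share_group m i k) = tri_prob (q i) (q j) (q k) (\<lambda>a b c. \<not> (a \<and> b) \<and> \<not> (a \<and> c)) ^ m"
    using gp[of "\<lambda>a b c. \<not> (a \<and> b) \<and> \<not> (a \<and> c)"] c_ij_ik by simp
  hence e4: "measure_pmf.prob ?M (- share_group m i j \<inter> - share_group m i k) = ff m (x*y + x*z - x*y*z)"
    unfolding qi t4 ff_def by simp
  have t5: "tri_prob (bernoulli_pmf x) (bernoulli_pmf y) (bernoulli_pmf z) (\<lambda>a b c. \<not> (a \<and> b) \<and> \<not> (b \<and> c)) = 1 - (x*y + y*z - x*y*z)"
    unfolding tb by (simp add: algebra_simps)
  have "measure_pmf.prob ?M (- share_group m i j \<inter> - share_group m j k) = tri_prob (q i) (q j) (q k) (\<lambda>a b c. \<not> (a \<and> b) \<and> \<not> (b \<and> c)) ^ m"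
    using gp[of "\<lambda>a b c. \<not> (a \<and> b) \<and> \<not> (b \<and> c)"] c_ij_jk by simp
  hence e5: "measure_pmf.prob ?M (- share_group m i j \<inter> - share_group m j k) = ff m (x*y + y*z - x*y*z)"
    unfolding qi t5 ff_def by simp
  have t6: "tri_prob (bernoulli_pmf x) (bernoulli_pmf y) (bernoulli_pmf z) (\<lambda>a b c. \<not> (a \<and> c) \<and> \<not> (b \<and> c)) = 1 - (x*z + y*z - x*y*z)"
    unfolding tb by (simp add: algebra_simps)
  have "measure_pmf.prob ?M (- share_group m i k \<inter> - share_group m j k) = tri_prob (q i) (q j) (q k) (\<lambda>a b c. \<not> (a \<and> c) \<and> \<not> (b \<and> c)) ^ m"
    using gp[of "\<lambda>a b c. \<not> (a \<and> c) \<and> \<not> (b \<and> c)"] c_ik_jk by simp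
  hence e6: "measure_pmf.prob ?M (- share_group m i k \<inter> - share_group m j k) = ff m (x*z + y*z - x*y*z)"
    unfolding qi t6 ff_def by simp
  have t7: "tri_prob (bernoulli_pmf x) (bernoulli_pmf y) (bernoulli_pmf z) (\<lambda>a b c. \<not> (a \<and> b) \<and> \<not> (a \<and> c) \<and> \<not> (b \<and> c)) = 1 - (x*y + x*z + y*z - 2*x*y*z)"
    unfolding tb by (simp add: algebra_simps)
  have "measure_pmf.prob ?M (- share_group m i j \<inter> - share_group m i k \<inter> - share_group m j k) = tri_prob (q i) (q j) (q k) (\<lambda>a b c. \<not> (a \<and> b) \<and> \<not> (a \<and> c) \<and> \<not> (b \<and> c)) ^ m"
    using gp[of "\<lambda>a b c. \<not> (a \<and> b) \<and> \<not> (a \<and> c) \<and> \<not> (b \<and> c)"] c_all by simp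
  hence e7: "measure_pmf.prob ?M (- share_group m i j \<inter> - share_group m i k \<inter> - share_group m j k) = ff m (x*y + x*z + y*z - 2*x*y*z)"
    unfolding qi t7 ff_def by simp
  have D: "measure_pmf.prob ?M (share_group m i k \<inter> share_group m j k) = Dform m x y z"
    using IE2[of ?M "share_group m i k" "share_group m j k"] e2 e3 e6 by (simp add: Dform_def)
  have N: "measure_pmf.prob ?M (share_group m i j \<inter> share_group m i k \<inter> share_group m j k) = Nform m x y z"
    using IE3[of ?M "share_group m i j" "share_group m i k" "share_group m j k"] e1 e2 e3 e4 e5 e6 e7
    by (simp add: Nform_def)
  show ?thesis
    unfolding cbar_def Let_def M m_def[symmetric] x_def[symmetric] y_def[symmetric] z_def[symmetric] D N ..
qed

lemma ratio_bounds:
  fixes x y z e K :: real and m :: nat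
  assumes xyz: "0 < x" "x \<le> 1" "0 < y" "y \<le> 1" "0 < z" "z \<le> 1" and m2: "m \<ge> 2"
    and e_def: "e = real m * (x*y + x*z + y*z)" and e4: "e \<le> 1/4"
    and K_def: "K = 1 + (real m - 1) * z"
  shows "(1 - 3*e) / K \<le> Nform m x y z / Dform m x y z
       \<and> Nform m x y z / Dform m x y z \<le> (2*e*K + 1 + 2*e) / (K * (1 - e))"
proof -
  define a where "a = x*y"
  define b where "b = x*z"
  define c where "c = y*z"
  define d where "d = x*y*z"
  define Z where "Z = 1 - a - b - c"
  define P where "P = Z ^ m"
  define u where "u = real m * d"
  have pos: "0 < a" "0 < b" "0 < c" "0 < d" unfolding a_def b_def c_def d_def using xyz by auto
  have dle: "d \<le> a" "d \<le> b" "d \<le> c" unfolding a_def b_def c_def d_def using xyz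
    by (auto simp: mult_left_le mult_le_cancel_left1 mult.assoc mult_left_le_one_le mult_right_le_one_le)
  have mpos: "real m \<ge> 2" using m2 by simp
  have sum_le: "a + b + c \<le> e / real m" using e_def mpos unfolding a_def b_def c_def by (simp add: field_simps)
  have e0: "e \<ge> 0" unfolding e_def using xyz by (auto intro!: mult_nonneg_nonneg add_nonneg_nonneg)
  have "e / real m \<le> e / 2" using e0 mpos by (intro divide_left_mono) auto
  hence "e / real m \<le> 1/8" using e4 by linarith
  hence Z0: "Z \<ge> 0" "Z \<le> 1" using sum_le pos unfolding Z_def by linarith+
  have P1': "P \<le> 1" unfolding P_def using Z0 by (simp add: power_le_one)
  have "1 + real m * (- (a + b + c)) \<le> (1 + (- (a + b + c))) ^ m"
    by (rule Bernoulli_inequality) (use sum_le \<open>e / real m \<le> 1/8\<close> in linarith)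
  hence Pge: "P \<ge> 1 - e" unfolding P_def Z_def e_def a_def b_def c_def by (simp add: algebra_simps)
  have upos: "u > 0" unfolding u_def using pos m2 by simp
  have K1: "K \<ge> 1" unfolding K_def using xyz mpos by simp
  define Y where "Y = 1 - b - c"
  have Y0: "Y \<ge> Z" "Y \<le> 1" unfolding Y_def Z_def using pos by auto
  have Deq: "Dform m x y z = ((Y+b+c)^m - (Y+b)^m - (Y+c)^m + Y^m) + ((Y+d)^m - Y^m)"
  proof -
    have eqs: "1 - x*z = Y + c" "1 - y*z = Y + b" "1 - (x*z + y*z - x*y*z) = Y + d" "Y + b + c = 1"
      unfolding Y_def b_def c_def d_def by (simp_all add: algebra_simps)
    show ?thesis unfolding Dform_def ff_def eqs by simp
  qed
  have p2: "real m * (real m - 1) * b * c * Y ^ (m - 2) \<le> (Y+b+c)^m - (Y+b)^m - (Y+c)^m + Y^m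
       \<and> (Y+b+c)^m - (Y+b)^m - (Y+c)^m + Y^m \<le> real m * (real m - 1) * b * c"
    by (rule P2) (use Y0 Z0 pos in \<open>auto simp: Y_def\<close>)
  have p1: "real m * d * Y ^ (m - 1) \<le> (Y + d) ^ m - Y ^ m \<and> (Y + d) ^ m - Y ^ m \<le> real m * d"
    by (rule P1) (use Y0 Z0 pos dle in \<open>auto simp: Y_def\<close>)
  have YP: "Y ^ (m - 2) \<ge> P" "Y ^ (m - 1) \<ge> P"
  proof -
    have "Y ^ (m - 2) \<ge> Y ^ m" "Y ^ (m - 1) \<ge> Y ^ m" using Y0 Z0 by (auto intro!: power_decreasing)
    moreover have "Y ^ m \<ge> P" unfolding P_def using Y0 Z0 by (auto intro!: power_mono)
    ultimately show "Y ^ (m - 2) \<ge> P" "Y ^ (m - 1) \<ge> P" by auto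
  qed
  have bc: "real m * (real m - 1) * b * c = u * (K - 1)"
    unfolding u_def K_def b_def c_def d_def by (simp add: algebra_simps)
  have Dup: "Dform m x y z \<le> u * K"
    using Deq p1 p2 bc unfolding u_def by (simp add: algebra_simps)
  have "real m * (real m - 1) * b * c * P \<le> real m * (real m - 1) * b * c * Y ^ (m - 2)"
    using YP pos mpos by (intro mult_left_mono) auto
  hence l2: "u * (K - 1) * P \<le> (Y+b+c)^m - (Y+b)^m - (Y+c)^m + Y^m" using p2 bc by simp
  have "real m * d * P \<le> real m * d * Y ^ (m - 1)"
    using YP pos mpos by (intro mult_left_mono) auto
  hence l1: "u * P \<le> (Y + d) ^ m - Y ^ m" using p1 unfolding u_def by simp
  have "u * K * P = u * (K - 1) * P + u * P" by (simp add: algebra_simps)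
  hence Dlo: "Dform m x y z \<ge> u * K * P" using Deq l1 l2 by linarith
  define E3 where "E3 = (Z+a+b+c)^m - (Z+b+c)^m - (Z+a+c)^m - (Z+a+b)^m + (Z+a)^m + (Z+b)^m + (Z+c)^m - Z^m"
  define T1 where "T1 = (Z+a+d)^m - (Z+a)^m"
  define T2 where "T2 = (Z+b+d)^m - (Z+b)^m"
  define T3 where "T3 = (Z+c+d)^m - (Z+c)^m"
  define T4 where "T4 = (Z+2*d)^m - Z^m"
  have Neq: "Nform m x y z = E3 + T1 + T2 + T3 - T4"
  proof -
    have eqs: "1 - x*y = Z+b+c" "1 - x*z = Z+a+c" "1 - y*z = Z+a+b" "Z+a+b+c = 1"
      "1 - (x*z + y*z - x*y*z) = Z+a+d" "1 - (x*y + x*z - x*y*z) = Z+c+d" "1 - (x*y + y*z - x*y*z) = Z+b+d"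
      "1 - (x*y + x*z + y*z - 2*x*y*z) = Z+2*d"
      unfolding Z_def a_def b_def c_def d_def by (simp_all add: algebra_simps)
    show ?thesis unfolding Nform_def ff_def E3_def T1_def T2_def T3_def T4_def eqs by simp
  qed
  have p3: "0 \<le> E3 \<and> E3 \<le> real m ^ 3 * a * b * c"
    unfolding E3_def by (rule P3) (use Z0 pos in \<open>auto simp: Z_def\<close>)
  have abc: "a * b * c = d * d" unfolding a_def b_def c_def d_def by (simp add: algebra_simps)
  have Tb: "u * P \<le> T \<and> T \<le> u" if "T = (Z+t+d)^m - (Z+t)^m" "0 \<le> t" "Z + t + d \<le> 1" for T t
  proof -
    have "real m * d * (Z+t) ^ (m - 1) \<le> T \<and> T \<le> real m * d"
      using P1[of "Z+t" d m] that Z0 pos by simp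
    moreover have "(Z+t) ^ (m-1) \<ge> P"
    proof -
      have "(Z+t) ^ (m-1) \<ge> Z ^ (m-1)" using that Z0 by (auto intro!: power_mono)
      moreover have "Z ^ (m-1) \<ge> Z ^ m" using Z0 by (auto intro!: power_decreasing)
      ultimately show ?thesis unfolding P_def by simp
    qed
    moreover have "real m * d * P \<le> real m * d * (Z+t) ^ (m - 1)"
      using calculation(2) pos by (intro mult_left_mono) auto
    ultimately show ?thesis unfolding u_def by linarith
  qed
  have t1: "u * P \<le> T1 \<and> T1 \<le> u" by (rule Tb[of _ a]) (use pos dle in \<open>auto simp: T1_def Z_def\<close>)
  have t2: "u * P \<le> T2 \<and> T2 \<le> u" by (rule Tb[of _ b]) (use pos dle in \<open>auto simp: T2_def Z_def\<close>)
  have t3: "u * P \<le> T3 \<and> T3 \<le> u" by (rule Tb[of _ c]) (use pos dle in \<open>auto simp: T3_def Z_def\<close>)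
  have t4: "2 * u * P \<le> T4 \<and> T4 \<le> 2 * u"
  proof -
    have "real m * (2*d) * Z ^ (m - 1) \<le> T4 \<and> T4 \<le> real m * (2*d)"
      unfolding T4_def using P1[of Z "2*d" m] Z0 pos dle by (simp add: Z_def)
    moreover have "Z ^ (m-1) \<ge> P" unfolding P_def using Z0 by (auto intro!: power_decreasing)
    moreover have "real m * (2*d) * P \<le> real m * (2*d) * Z ^ (m - 1)"
      using calculation(2) pos by (intro mult_left_mono) auto
    ultimately show ?thesis unfolding u_def by (simp add: mult_ac)
  qed
  have r1: "u * (3 * P - 2) = 3 * (u * P) - 2 * u" "u * (3 - 2 * P) = 3 * u - 2 * (u * P)"
    "2 * u * P = 2 * (u * P)" by (simp_all add: algebra_simps)
  have r2: "real m ^ 3 * a * b * c = real m ^ 3 * d * d" using abc by (simp add: mult.assoc)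
  have Nlo: "Nform m x y z \<ge> u * (3 * P - 2)" using Neq p3 t1 t2 t3 t4 r1 by linarith
  have Nup: "Nform m x y z \<le> real m ^ 3 * d * d + u * (3 - 2 * P)"
    using Neq p3 t1 t2 t3 t4 r1 r2 by linarith
  have P34: "3 * P - 2 \<ge> 0" using Pge e4 by linarith
  have Dpos: "Dform m x y z > 0"
  proof -
    have "u * K * P > 0" using upos K1 Pge e4 by (intro mult_pos_pos) auto
    thus ?thesis using Dlo by linarith
  qed
  have "(1 - 3*e) / K \<le> (3 * P - 2) / K" using Pge K1 by (intro divide_right_mono) auto
  also have "\<dots> = u * (3 * P - 2) / (u * K)" using upos by simp
  also have "\<dots> \<le> u * (3 * P - 2) / Dform m x y z"
    using Dpos Dup P34 upos by (intro divide_left_mono) (auto intro!: mult_pos_pos)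
  also have "\<dots> \<le> Nform m x y z / Dform m x y z"
    using Nlo Dpos by (intro divide_right_mono) auto
  finally have lo: "(1 - 3*e) / K \<le> Nform m x y z / Dform m x y z" .
  have m2d: "real m * real m * d \<le> 2 * e * K"
  proof -
    have "real m * z \<le> 2 * ((real m - 1) * z)" using mpos xyz by (simp add: algebra_simps)
    hence "real m * z \<le> 2 * K" unfolding K_def by simp
    hence "real m * x * y * (real m * z) \<le> real m * x * y * (2 * K)"
      using xyz mpos by (intro mult_left_mono) auto
    moreover have "real m * x * y \<le> e"
    proof -
      have "x * y \<le> x * y + x * z + y * z" using xyz by simp
      hence "real m * (x * y) \<le> real m * (x * y + x * z + y * z)" using mpos by (intro mult_left_mono) auto
      thus ?thesis unfolding e_def by (simp add: mult.assoc)
    qed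
    moreover have "real m * x * y * (2 * K) \<le> e * (2 * K)" using calculation(2) K1 by (intro mult_right_mono) auto
    ultimately show ?thesis unfolding d_def by (simp add: algebra_simps)
  qed
  have Nnn: "Nform m x y z \<ge> 0" using Nlo upos P34 by (meson mult_nonneg_nonneg less_imp_le order_trans)
  have "Nform m x y z / Dform m x y z \<le> Nform m x y z / (u * K * P)"
    using Nnn Dlo Dpos upos K1 Pge e4 by (intro divide_left_mono) (auto intro!: mult_pos_pos)
  also have "\<dots> \<le> (real m ^ 3 * d * d + u * (3 - 2 * P)) / (u * K * P)"
    using Nup upos K1 Pge e4 by (intro divide_right_mono) (auto intro!: mult_nonneg_nonneg)
  also have "\<dots> = (real m * real m * d + (3 - 2 * P)) / (K * P)"
  proof -
    have "P > 0" "K > 0" using Pge e4 K1 by linarith+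
    moreover have "d > 0" "real m > 0" using pos mpos by auto
    ultimately show ?thesis unfolding u_def by (simp add: field_simps power3_eq_cube)
  qed
  also have "\<dots> \<le> (2*e*K + 1 + 2*e) / (K * P)"
    using m2d Pge K1 e4 by (intro divide_right_mono) (auto intro!: mult_nonneg_nonneg)
  also have "\<dots> \<le> (2*e*K + 1 + 2*e) / (K * (1 - e))"
    using Pge K1 e4 e_def xyz by (intro divide_left_mono mult_left_mono mult_pos_pos) (auto intro!: add_nonneg_nonneg mult_nonneg_nonneg)
  finally show ?thesis using lo by simp
qed

lemma num_groups_bounds:
  assumes "\<beta> > 0"
  shows "real (num_groups \<alpha> \<beta> n) \<le> \<beta> * real n powr \<alpha>"
    "real (num_groups \<alpha> \<beta> n) \<ge> \<beta> * real n powr \<alpha> - 1"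
proof -
  have nn: "\<beta> * real n powr \<alpha> \<ge> 0" using assms by simp
  hence "real (num_groups \<alpha> \<beta> n) = real_of_int \<lfloor>\<beta> * real n powr \<alpha>\<rfloor>"
    unfolding num_groups_def by simp
  thus "real (num_groups \<alpha> \<beta> n) \<le> \<beta> * real n powr \<alpha>" "real (num_groups \<alpha> \<beta> n) \<ge> \<beta> * real n powr \<alpha> - 1"
    by linarith+
qed

lemma powr_at_top_seq:
  assumes "p > 0"
  shows "filterlim (\<lambda>n. real n powr p) at_top sequentially"
proof -
  have "((\<lambda>n. real n powr (-p)) \<longlongrightarrow> 0) sequentially"
    using tendsto_neg_powr[OF _ filterlim_real_sequentially, of "-p"] assms by simp
  moreover have "eventually (\<lambda>n. 0 < real n powr (-p)) sequentially"
    using eventually_gt_at_top[of 0] by eventually_elim simp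
  ultimately have fl: "filterlim (\<lambda>n. inverse (real n powr (-p))) at_top sequentially"
    by (rule filterlim_inverse_at_top)
  have ev: "eventually (\<lambda>n. inverse (real n powr (-p)) = real n powr p) sequentially"
    using eventually_gt_at_top[of 0] by eventually_elim (simp add: powr_minus)
  show ?thesis using fl filterlim_cong[OF refl refl ev] by simp
qed

context
  fixes \<alpha> \<beta> \<gamma> :: real
  assumes \<alpha>: "\<alpha> > 0" and \<beta>: "\<beta> > 0" and \<gamma>: "\<gamma> > 0"
begin

definition "ssq n = real n powr (- (1 + \<alpha>) / 2)"
definition "mgr n = real (num_groups \<alpha> \<beta> n)"

lemma sn_pos: "n \<ge> 1 \<Longrightarrow> ssq n > 0" unfolding ssq_def by simp

lemma sn_lim: "ssq \<longlonglongrightarrow> 0"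
  unfolding ssq_def using tendsto_neg_powr[OF _ filterlim_real_sequentially, of "- (1 + \<alpha>) / 2"] \<alpha>
  by simp

lemma mn_nonneg: "mgr n \<ge> 0" unfolding mgr_def by simp

lemma mss_lim: "(\<lambda>n. mgr n * ssq n * ssq n) \<longlonglongrightarrow> 0"
proof (rule tendsto_sandwich[of "\<lambda>_. 0" _ _ "\<lambda>n. \<beta> * inverse (real n)"])
  show "eventually (\<lambda>n. 0 \<le> mgr n * ssq n * ssq n) sequentially"
    by (intro always_eventually allI) (simp add: mgr_def ssq_def)
  show "eventually (\<lambda>n. mgr n * ssq n * ssq n \<le> \<beta> * inverse (real n)) sequentially"
    using eventually_ge_at_top[of 1]
  proof eventually_elim
    case (elim n)
    have "mgr n * (ssq n * ssq n) \<le> \<beta> * real n powr \<alpha> * (ssq n * ssq n)"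
      using num_groups_bounds(1)[OF \<beta>, where \<alpha>=\<alpha> and n=n] unfolding mgr_def
      by (intro mult_right_mono) (auto simp: ssq_def)
    hence "mgr n * ssq n * ssq n \<le> \<beta> * real n powr \<alpha> * (ssq n * ssq n)" by (simp add: mult.assoc)
    also have "\<dots> = \<beta> * (real n powr (\<alpha> + (- (1 + \<alpha>) / 2) + (- (1 + \<alpha>) / 2)))"
      unfolding ssq_def powr_add by (simp add: mult_ac)
    also have "\<alpha> + (- (1 + \<alpha>) / 2) + (- (1 + \<alpha>) / 2) = -1" by (simp add: field_simps)
    also have "real n powr (-1) = inverse (real n)" using elim by (simp add: powr_minus)
    finally show ?case .
  qed
  show "(\<lambda>n. \<beta> * inverse (real n)) \<longlonglongrightarrow> 0"
    by (intro tendsto_mult_right_zero tendsto_inverse_0_at_top filterlim_real_sequentially)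
qed simp

definition "tpw n = real n powr ((\<alpha> - 1) / 2)"

lemma ms_bounds:
  fixes n :: nat
  assumes "n \<ge> 1"
  shows "mgr n * ssq n \<le> \<beta> * tpw n" "mgr n * ssq n \<ge> \<beta> * tpw n - ssq n"
proof -
  have e: "real n powr \<alpha> * ssq n = tpw n"
    unfolding ssq_def tpw_def powr_add[symmetric] by (simp add: field_simps)
  have s0: "ssq n > 0" using sn_pos assms by simp
  have "mgr n * ssq n \<le> \<beta> * real n powr \<alpha> * ssq n"
    using num_groups_bounds(1)[OF \<beta>, where \<alpha>=\<alpha> and n=n] s0 unfolding mgr_def by (intro mult_right_mono) auto
  thus "mgr n * ssq n \<le> \<beta> * tpw n" using e by (simp add: mult.assoc)
  have "(\<beta> * real n powr \<alpha> - 1) * ssq n \<le> mgr n * ssq n"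
    using num_groups_bounds(2)[OF \<beta>, where \<alpha>=\<alpha> and n=n] s0 unfolding mgr_def by (intro mult_right_mono) auto
  thus "mgr n * ssq n \<ge> \<beta> * tpw n - ssq n" using e by (simp add: algebra_simps)
qed

lemma mn_at_top: "filterlim mgr at_top sequentially"
proof -
  have "filterlim (\<lambda>n. (-1) + \<beta> * real n powr \<alpha>) at_top sequentially"
    by (rule filterlim_tendsto_add_at_top[OF tendsto_const])
       (rule filterlim_tendsto_pos_mult_at_top[OF tendsto_const \<beta> powr_at_top_seq[OF \<alpha>]])
  thus ?thesis
    by (rule filterlim_at_top_mono) (use num_groups_bounds(2)[OF \<beta>] in \<open>auto simp: mgr_def\<close>)
qed

definition hlim :: "real \<Rightarrow> real" where
  "hlim w = (if \<alpha> < 1 then 1 else if \<alpha> = 1 then 1 / (1 + \<beta> * \<gamma> * w) else 0)"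

lemma invK_lim:
  assumes w: "w > 0"
  shows "(\<lambda>n. 1 / (1 + (mgr n - 1) * (\<gamma> * w * ssq n))) \<longlonglongrightarrow> hlim w"
proof -
  have r_eq: "(mgr n - 1) * (\<gamma> * w * ssq n) = \<gamma> * w * (mgr n * ssq n - ssq n)" for n
    by (simp add: algebra_simps)
  consider "\<alpha> < 1" | "\<alpha> = 1" | "\<alpha> > 1" by linarith
  thus ?thesis
  proof cases
    case 1
    have t0: "tpw \<longlonglongrightarrow> 0" unfolding tpw_def
      using tendsto_neg_powr[OF _ filterlim_real_sequentially, of "(\<alpha> - 1) / 2"] 1 by simp
    have "(\<lambda>n. mgr n * ssq n) \<longlonglongrightarrow> 0"
    proof (rule tendsto_sandwich[of "\<lambda>_. 0" _ _ "\<lambda>n. \<beta> * tpw n"])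
      show "eventually (\<lambda>n. 0 \<le> mgr n * ssq n) sequentially"
        by (intro always_eventually allI) (simp add: mgr_def ssq_def)
      show "eventually (\<lambda>n. mgr n * ssq n \<le> \<beta> * tpw n) sequentially"
        using eventually_ge_at_top[of 1] by eventually_elim (rule ms_bounds(1))
      show "(\<lambda>n. \<beta> * tpw n) \<longlonglongrightarrow> 0" using tendsto_mult_right_zero[OF t0] by simp
    qed simp
    hence "(\<lambda>n. 1 / (1 + \<gamma> * w * (mgr n * ssq n - ssq n))) \<longlonglongrightarrow> 1 / (1 + \<gamma> * w * (0 - 0))"
      by (intro tendsto_intros sn_lim) auto
    thus ?thesis using 1 unfolding hlim_def r_eq by simp
  next
    case 2
    have t1: "eventually (\<lambda>n. tpw n = 1) sequentially"
      using eventually_ge_at_top[of 1] by eventually_elim (unfold tpw_def, simp add: 2)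
    have "(\<lambda>n. mgr n * ssq n) \<longlonglongrightarrow> \<beta>"
    proof (rule tendsto_sandwich[of "\<lambda>n. \<beta> - ssq n" _ _ "\<lambda>n. \<beta>"])
      show "eventually (\<lambda>n. \<beta> - ssq n \<le> mgr n * ssq n) sequentially"
        using eventually_ge_at_top[of 1] t1 by eventually_elim (use ms_bounds(2) in force)
      show "eventually (\<lambda>n. mgr n * ssq n \<le> \<beta>) sequentially"
        using eventually_ge_at_top[of 1] t1 by eventually_elim (use ms_bounds(1) in force)
      show "(\<lambda>n. \<beta> - ssq n) \<longlonglongrightarrow> \<beta>" using tendsto_diff[OF tendsto_const sn_lim, of \<beta>] by simp
    qed simp
    hence "(\<lambda>n. 1 / (1 + \<gamma> * w * (mgr n * ssq n - ssq n))) \<longlonglongrightarrow> 1 / (1 + \<gamma> * w * (\<beta> - 0))"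
    proof -
      have "1 + \<gamma> * w * \<beta> > 0" using \<beta> \<gamma> w by (simp add: add_pos_pos)
      thus ?thesis using \<open>(\<lambda>n. mgr n * ssq n) \<longlonglongrightarrow> \<beta>\<close> by (intro tendsto_intros sn_lim) auto
    qed
    thus ?thesis using 2 unfolding hlim_def r_eq by (simp add: mult_ac)
  next
    case 3
    have "filterlim tpw at_top sequentially" unfolding tpw_def using powr_at_top_seq 3 by simp
    hence "filterlim (\<lambda>n. \<beta> * tpw n - 2 * ssq n) at_top sequentially"
      using filterlim_tendsto_add_at_top[OF tendsto_mult_right_zero[OF sn_lim, of "-2"]
            filterlim_tendsto_pos_mult_at_top[OF tendsto_const \<beta>]] by (simp add: algebra_simps)
    hence "filterlim (\<lambda>n. \<gamma> * w * (\<beta> * tpw n - 2 * ssq n)) at_top sequentially"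
      using \<gamma> w by (intro filterlim_tendsto_pos_mult_at_top[OF tendsto_const]) auto
    hence "filterlim (\<lambda>n. 1 + (mgr n - 1) * (\<gamma> * w * ssq n)) at_top sequentially"
    proof (rule filterlim_at_top_mono)
      show "eventually (\<lambda>n. \<gamma> * w * (\<beta> * tpw n - 2 * ssq n) \<le> 1 + (mgr n - 1) * (\<gamma> * w * ssq n)) sequentially"
        using eventually_ge_at_top[of 1]
      proof eventually_elim
        case (elim n)
        have "\<beta> * tpw n - 2 * ssq n \<le> mgr n * ssq n - ssq n" using ms_bounds(2)[OF elim] sn_pos[OF elim] by simp
        hence "\<gamma> * w * (\<beta> * tpw n - 2 * ssq n) \<le> \<gamma> * w * (mgr n * ssq n - ssq n)"
          using \<gamma> w by (intro mult_left_mono) auto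
        thus ?case unfolding r_eq by simp
      qed
    qed
    hence "(\<lambda>n. inverse (1 + (mgr n - 1) * (\<gamma> * w * ssq n))) \<longlonglongrightarrow> 0"
      by (rule tendsto_inverse_0_at_top)
    thus ?thesis using 3 unfolding hlim_def by (simp add: divide_inverse)
  qed
qed

end

definition Gf :: "real \<Rightarrow> real \<Rightarrow> real \<Rightarrow> nat \<Rightarrow> real \<Rightarrow> real \<Rightarrow> real \<Rightarrow> real" where
  "Gf \<alpha> \<beta> \<gamma> n a b c = Nform (num_groups \<alpha> \<beta> n) (qq \<alpha> \<gamma> n a) (qq \<alpha> \<gamma> n b) (qq \<alpha> \<gamma> n c)
     / Dform (num_groups \<alpha> \<beta> n) (qq \<alpha> \<gamma> n a) (qq \<alpha> \<gamma> n b) (qq \<alpha> \<gamma> n c)"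

lemma qq_ev:
  fixes \<alpha> \<beta> \<gamma> w :: real
  assumes \<alpha>: "\<alpha> > 0" and \<beta>: "\<beta> > 0" and \<gamma>: "\<gamma> > 0" and w: "w > 0"
  shows "eventually (\<lambda>n. qq \<alpha> \<gamma> n w = \<gamma> * w * ssq \<alpha> n \<and> 0 < \<gamma> * w * ssq \<alpha> n \<and> \<gamma> * w * ssq \<alpha> n \<le> 1) sequentially"
proof -
  have "(\<lambda>n. \<gamma> * w * ssq \<alpha> n) \<longlonglongrightarrow> \<gamma> * w * 0"
    by (intro tendsto_intros sn_lim[OF \<alpha> \<beta> \<gamma>])
  hence "eventually (\<lambda>n. \<gamma> * w * ssq \<alpha> n < 1) sequentially"
    by (intro order_tendstoD(2)) auto
  thus ?thesis using eventually_ge_at_top[of 1]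
  proof eventually_elim
    case (elim n)
    have s: "ssq \<alpha> n > 0" using sn_pos[OF \<alpha> \<beta> \<gamma>] elim by simp
    hence "0 < \<gamma> * w * ssq \<alpha> n" using \<gamma> w by simp
    thus ?case using elim unfolding qq_def edge_prob_def ssq_def[OF \<alpha> \<beta> \<gamma>] by auto
  qed
qed

lemma ptw:
  assumes \<alpha>: "\<alpha> > 0" and \<beta>: "\<beta> > 0" and \<gamma>: "\<gamma> > 0"
    and w: "w1 > 0" "w2 > 0" "w3 > 0"
  shows "(\<lambda>n. Gf \<alpha> \<beta> \<gamma> n w1 w2 w3) \<longlonglongrightarrow> hlim \<alpha> \<beta> \<gamma> w3"
proof -
  define X where "X n = \<gamma> * w1 * ssq \<alpha> n" for n
  define Y where "Y n = \<gamma> * w2 * ssq \<alpha> n" for n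
  define Z where "Z n = \<gamma> * w3 * ssq \<alpha> n" for n
  define E where "E n = mgr \<alpha> \<beta> n * (X n * Y n + X n * Z n + Y n * Z n)" for n
  define K where "K n = 1 + (mgr \<alpha> \<beta> n - 1) * Z n" for n
  define h where "h = hlim \<alpha> \<beta> \<gamma> w3"
  have E_eq: "E n = (\<gamma> * \<gamma> * (w1 * w2 + w1 * w3 + w2 * w3)) * (mgr \<alpha> \<beta> n * ssq \<alpha> n * ssq \<alpha> n)" for n
    unfolding E_def X_def Y_def Z_def by (simp add: algebra_simps)
  have E0: "E \<longlonglongrightarrow> 0"
    unfolding E_eq using tendsto_mult_right_zero[OF mss_lim[OF \<alpha> \<beta> \<gamma>]] by simp
  have iK: "(\<lambda>n. 1 / K n) \<longlonglongrightarrow> h"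
    unfolding K_def Z_def h_def by (rule invK_lim[OF \<alpha> \<beta> \<gamma> w(3)])
  have lo_lim: "(\<lambda>n. (1 - 3 * E n) * (1 / K n)) \<longlonglongrightarrow> (1 - 3 * 0) * h"
    by (intro tendsto_intros E0 iK)
  have up_lim: "(\<lambda>n. (2 * E n + (1 + 2 * E n) * (1 / K n)) / (1 - E n)) \<longlonglongrightarrow> (2 * 0 + (1 + 2 * 0) * h) / (1 - 0)"
    by (intro tendsto_intros E0 iK) auto
  have m2: "eventually (\<lambda>n. mgr \<alpha> \<beta> n \<ge> 2) sequentially"
    using mn_at_top[OF \<alpha> \<beta> \<gamma>] by (simp add: filterlim_at_top)
  have E4: "eventually (\<lambda>n. E n < 1/4) sequentially"
    using E0 by (intro order_tendstoD(2)) auto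
  have bounds: "eventually (\<lambda>n. (1 - 3 * E n) * (1 / K n) \<le> Gf \<alpha> \<beta> \<gamma> n w1 w2 w3 \<and>
      Gf \<alpha> \<beta> \<gamma> n w1 w2 w3 \<le> (2 * E n + (1 + 2 * E n) * (1 / K n)) / (1 - E n)) sequentially"
    using qq_ev[OF \<alpha> \<beta> \<gamma> w(1)] qq_ev[OF \<alpha> \<beta> \<gamma> w(2)] qq_ev[OF \<alpha> \<beta> \<gamma> w(3)] m2 E4
  proof eventually_elim
    case (elim n)
    have G: "Gf \<alpha> \<beta> \<gamma> n w1 w2 w3 = Nform (num_groups \<alpha> \<beta> n) (X n) (Y n) (Z n) / Dform (num_groups \<alpha> \<beta> n) (X n) (Y n) (Z n)"
      unfolding Gf_def X_def Y_def Z_def using elim by simp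
    have mg: "num_groups \<alpha> \<beta> n \<ge> 2" using elim by (simp add: mgr_def[OF \<alpha> \<beta> \<gamma>])
    have R: "(1 - 3 * E n) / K n \<le> Gf \<alpha> \<beta> \<gamma> n w1 w2 w3 \<and>
      Gf \<alpha> \<beta> \<gamma> n w1 w2 w3 \<le> (2 * E n * K n + 1 + 2 * E n) / (K n * (1 - E n))"
      unfolding G
      by (rule ratio_bounds) (use elim mg in \<open>auto simp: X_def Y_def Z_def E_def K_def mgr_def[OF \<alpha> \<beta> \<gamma>]\<close>)
    have z: "Z n > 0" using elim by (simp add: Z_def)
    have "mgr \<alpha> \<beta> n - 1 \<ge> 0" using elim by simp
    hence "(mgr \<alpha> \<beta> n - 1) * Z n \<ge> 0" using z by (intro mult_nonneg_nonneg) auto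
    hence Kpos: "K n > 0" unfolding K_def by simp
    have "(2 * E n * K n + 1 + 2 * E n) / (K n * (1 - E n)) = (2 * E n + (1 + 2 * E n) * (1 / K n)) / (1 - E n)"
      using Kpos elim by (simp add: field_simps)
    thus ?case using R by simp
  qed
  show ?thesis
  proof (rule tendsto_sandwich[of "\<lambda>n. (1 - 3 * E n) * (1 / K n)" _ _ "\<lambda>n. (2 * E n + (1 + 2 * E n) * (1 / K n)) / (1 - E n)"])
    show "eventually (\<lambda>n. (1 - 3 * E n) * (1 / K n) \<le> Gf \<alpha> \<beta> \<gamma> n w1 w2 w3) sequentially"
      using bounds by (rule eventually_mono) auto
    show "eventually (\<lambda>n. Gf \<alpha> \<beta> \<gamma> n w1 w2 w3 \<le> (2 * E n + (1 + 2 * E n) * (1 / K n)) / (1 - E n)) sequentially"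
      using bounds by (rule eventually_mono) auto
    show "(\<lambda>n. (1 - 3 * E n) * (1 / K n)) \<longlonglongrightarrow> hlim \<alpha> \<beta> \<gamma> w3" using lo_lim by (simp add: h_def)
    show "(\<lambda>n. (2 * E n + (1 + 2 * E n) * (1 / K n)) / (1 - E n)) \<longlonglongrightarrow> hlim \<alpha> \<beta> \<gamma> w3" using up_lim by (simp add: h_def)
  qed
qed

lemma cbar_01: "0 \<le> cbar \<alpha> \<beta> \<gamma> n W i j k \<and> cbar \<alpha> \<beta> \<gamma> n W i j k \<le> 1"
proof -
  define M where "M = bip_pmf \<alpha> \<beta> \<gamma> n W"
  define m where "m = num_groups \<alpha> \<beta> n"
  define a where "a = measure_pmf.prob M (share_group m i j \<inter> share_group m i k \<inter> share_group m j k)"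
  define b where "b = measure_pmf.prob M (share_group m i k \<inter> share_group m j k)"
  have ab: "0 \<le> a" "a \<le> b" unfolding a_def b_def
    by (auto intro!: measure_pmf.finite_measure_mono)
  have "cbar \<alpha> \<beta> \<gamma> n W i j k = a / b" unfolding cbar_def Let_def a_def b_def M_def m_def ..
  thus ?thesis using ab by (cases "b = 0") (auto simp: divide_le_eq_1)
qed

lemma G_01:
  assumes "n \<ge> 3"
  shows "0 \<le> Gf \<alpha> \<beta> \<gamma> n a b c \<and> Gf \<alpha> \<beta> \<gamma> n a b c \<le> 1"
proof -
  define W where "W = (\<lambda>v::nat. if v = 1 then a else if v = 2 then b else c)"
  have "cbar \<alpha> \<beta> \<gamma> n W 1 2 3 = Gf \<alpha> \<beta> \<gamma> n a b c"
    by (subst cbar_formula) (use assms in \<open>auto simp: Gf_def W_def\<close>)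
  thus ?thesis using cbar_01[of \<alpha> \<beta> \<gamma> n W 1 2 3] by simp
qed

lemma G_meas[measurable]:
  assumes [measurable]: "f \<in> borel_measurable M" "g \<in> borel_measurable M" "h \<in> borel_measurable M"
  shows "(\<lambda>x. Gf \<alpha> \<beta> \<gamma> n (f x) (g x) (h x)) \<in> borel_measurable M"
  unfolding Gf_def Nform_def Dform_def ff_def qq_def edge_prob_def by measurable

lemma hlim_meas[measurable]:
  assumes [measurable]: "f \<in> borel_measurable M"
  shows "(\<lambda>x. (if \<alpha> < 1 then 1 else if \<alpha> = 1 then 1 / (1 + \<beta> * \<gamma> * f x) else 0 :: real)) \<in> borel_measurable M"
  by measurable

theorem mainTheorem4:
  fixes F :: "real measure" and \<alpha> \<beta> \<gamma> :: real and i j k :: nat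
  assumes "prob_space F" and "sets F = sets borel"
    and "AE x in F. x > 0"
    and "integrable F (\<lambda>x. x)" and "integral\<^sup>L F (\<lambda>x. x) = 1"
    and "\<alpha> > 0" and "\<beta> > 0" and "\<gamma> > 0"
    and "i \<ge> 1" and "j \<ge> 1" and "k \<ge> 1"
    and "i \<noteq> j" and "i \<noteq> k" and "j \<noteq> k"
  shows "(\<lambda>n. exp_cbar F \<alpha> \<beta> \<gamma> n i j k) \<longlonglongrightarrow>
           (if \<alpha> < 1 then 1
            else if \<alpha> = 1 then integral\<^sup>L F (\<lambda>x. 1 / (1 + \<beta> * \<gamma> * x))
            else 0)"
proof -
  note F = assms(1) and sF = assms(2) and pos = assms(3)
  note \<alpha> = assms(6) and \<beta> = assms(7) and \<gamma> = assms(8)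
  interpret F: prob_space F by (rule F)
  define N0 where "N0 = max i (max j k)"
  define J where "J = {i, j, k}"
  define PJ where "PJ = PiM J (\<lambda>_. F)"
  define H where "H = (\<lambda>x::real. if \<alpha> < 1 then 1 else if \<alpha> = 1 then 1 / (1 + \<beta> * \<gamma> * x) else 0)"
  have N03: "N0 \<ge> 3" unfolding N0_def using assms(9-14) by linarith
  have JN: "J \<subseteq> {1..n}" if "n \<ge> N0" for n using that assms(9-11) by (auto simp: J_def N0_def)
  have finJ: "finite J" unfolding J_def by simp
  have mcF: "measurable PJ F = measurable PJ borel" by (rule measurable_cong_sets[OF refl sF])
  have comp: "(\<lambda>\<omega>. \<omega> l) \<in> borel_measurable PJ" if "l \<in> J" for l
    using measurable_component_singleton[OF that, of "\<lambda>_. F"] mcF unfolding PJ_def by simp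
  have compi: "(\<lambda>\<omega>. \<omega> i) \<in> borel_measurable PJ" "(\<lambda>\<omega>. \<omega> j) \<in> borel_measurable PJ"
    "(\<lambda>\<omega>. \<omega> k) \<in> borel_measurable PJ" by (auto intro!: comp simp: J_def)
  have Gm: "(\<lambda>\<omega>. Gf \<alpha> \<beta> \<gamma> n (\<omega> i) (\<omega> j) (\<omega> k)) \<in> borel_measurable PJ" for n
    using compi by measurable
  have PP: "product_prob_space (\<lambda>_. F)" by (rule product_prob_spaceI) (rule F)
  interpret PJ: prob_space PJ unfolding PJ_def by (rule prob_space_PiM) (rule F)
  have eq: "exp_cbar F \<alpha> \<beta> \<gamma> n i j k = integral\<^sup>L PJ (\<lambda>\<omega>. Gf \<alpha> \<beta> \<gamma> n (\<omega> i) (\<omega> j) (\<omega> k))"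
    if n: "n \<ge> N0" for n
  proof -
    interpret PP: product_prob_space "\<lambda>_. F" "{1..n}" using PP .
    have ijk: "i \<in> {1..n}" "j \<in> {1..n}" "k \<in> {1..n}" using JN[OF n] unfolding J_def by auto
    have "exp_cbar F \<alpha> \<beta> \<gamma> n i j k = integral\<^sup>L (PiM {1..n} (\<lambda>_. F)) (\<lambda>W. Gf \<alpha> \<beta> \<gamma> n (W i) (W j) (W k))"
      unfolding exp_cbar_def
      by (intro Bochner_Integration.integral_cong refl)
         (use ijk assms(12-14) in \<open>simp add: cbar_formula Gf_def\<close>)
    also have "\<dots> = integral\<^sup>L (PiM {1..n} (\<lambda>_. F)) (\<lambda>W. (\<lambda>\<omega>. Gf \<alpha> \<beta> \<gamma> n (\<omega> i) (\<omega> j) (\<omega> k)) (restrict W J))"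
      by (simp add: J_def)
    also have "\<dots> = integral\<^sup>L (distr (PiM {1..n} (\<lambda>_. F)) PJ (\<lambda>W. restrict W J)) (\<lambda>\<omega>. Gf \<alpha> \<beta> \<gamma> n (\<omega> i) (\<omega> j) (\<omega> k))"
      by (rule integral_distr[symmetric, OF _ Gm]) (unfold PJ_def, rule measurable_restrict_subset[OF JN[OF n]])
    also have "distr (PiM {1..n} (\<lambda>_. F)) PJ (\<lambda>W. restrict W J) = PJ"
      unfolding PJ_def by (rule PP.distr_PiM_restrict_finite[OF finJ JN[OF n]])
    finally show ?thesis .
  qed
  have AEpos: "AE \<omega> in PJ. 0 < \<omega> i \<and> 0 < \<omega> j \<and> 0 < \<omega> k"
  proof -
    have "AE \<omega> in PJ. 0 < \<omega> l" if "l \<in> J" for l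
      unfolding PJ_def by (rule AE_PiM_component[OF _ that]) (use F pos in auto)
    thus ?thesis unfolding J_def by auto
  qed
  have dct: "(\<lambda>n. integral\<^sup>L PJ (\<lambda>\<omega>. Gf \<alpha> \<beta> \<gamma> (n + N0) (\<omega> i) (\<omega> j) (\<omega> k)))
      \<longlonglongrightarrow> integral\<^sup>L PJ (\<lambda>\<omega>. H (\<omega> k))"
  proof (rule integral_dominated_convergence[where w = "\<lambda>_. 1"])
    show "(\<lambda>\<omega>. H (\<omega> k)) \<in> borel_measurable PJ" unfolding H_def using compi by measurable
    show "(\<lambda>\<omega>. Gf \<alpha> \<beta> \<gamma> (n + N0) (\<omega> i) (\<omega> j) (\<omega> k)) \<in> borel_measurable PJ" for n by (rule Gm)
    show "integrable PJ (\<lambda>_. 1::real)" by simp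
    show "AE \<omega> in PJ. norm (Gf \<alpha> \<beta> \<gamma> (n + N0) (\<omega> i) (\<omega> j) (\<omega> k)) \<le> 1" for n
      using G_01[of "n + N0"] N03 by auto
    show "AE \<omega> in PJ. (\<lambda>n. Gf \<alpha> \<beta> \<gamma> (n + N0) (\<omega> i) (\<omega> j) (\<omega> k)) \<longlonglongrightarrow> H (\<omega> k)"
      using AEpos
    proof eventually_elim
      case (elim \<omega>)
      have "(\<lambda>n. Gf \<alpha> \<beta> \<gamma> n (\<omega> i) (\<omega> j) (\<omega> k)) \<longlonglongrightarrow> hlim \<alpha> \<beta> \<gamma> (\<omega> k)"
        using elim by (intro ptw \<alpha> \<beta> \<gamma>) auto
      hence "(\<lambda>n. Gf \<alpha> \<beta> \<gamma> (n + N0) (\<omega> i) (\<omega> j) (\<omega> k)) \<longlonglongrightarrow> hlim \<alpha> \<beta> \<gamma> (\<omega> k)"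
        by (rule LIMSEQ_ignore_initial_segment)
      thus ?case by (simp add: hlim_def[OF \<alpha> \<beta> \<gamma>] H_def)
    qed
  qed
  have int3: "integral\<^sup>L PJ (\<lambda>\<omega>. H (\<omega> k)) = integral\<^sup>L F H"
  proof -
    have "integral\<^sup>L F H = integral\<^sup>L (distr PJ F (\<lambda>\<omega>. \<omega> k)) H"
      unfolding PJ_def by (subst distr_PiM_component) (use F in \<open>auto simp: J_def\<close>)
    also have "\<dots> = integral\<^sup>L PJ (\<lambda>\<omega>. H (\<omega> k))"
    proof (rule integral_distr)
      show "(\<lambda>\<omega>. \<omega> k) \<in> measurable PJ F" unfolding PJ_def by (rule measurable_component_singleton) (simp add: J_def)
      have "H \<in> borel_measurable borel" unfolding H_def by measurable
      thus "H \<in> borel_measurable F" unfolding measurable_cong_sets[OF sF refl, of borel] .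
    qed
    finally show ?thesis by simp
  qed
  have int4: "integral\<^sup>L F H = (if \<alpha> < 1 then 1
            else if \<alpha> = 1 then integral\<^sup>L F (\<lambda>x. 1 / (1 + \<beta> * \<gamma> * x)) else 0)"
    unfolding H_def by (auto simp: F.prob_space)
  have "(\<lambda>n. exp_cbar F \<alpha> \<beta> \<gamma> (n + N0) i j k) \<longlonglongrightarrow> integral\<^sup>L F H"
    using dct int3 eq by simp
  hence "(\<lambda>n. exp_cbar F \<alpha> \<beta> \<gamma> n i j k) \<longlonglongrightarrow> integral\<^sup>L F H"
    by (rule LIMSEQ_offset)
  thus ?thesis using int4 by simp
qed

end
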